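(* Let $t$ be a closed term and suppose $t\to_w^h a_s$ with $a_s$ a strict answer. Then (1) $t\to_y^k a_s$ for some $k\in\mathbb{N}$; and (2) $h\leq k$.
   Context: Terms: $t ::= x \mid \lambda x.t \mid t\,u \mid t[x\backslash u]$ ($t[x\backslash u]$ an explicit substitution binding $x$ in $t$; terms up to $\alpha$). Values $v ::= \lambda x.t$. Substitution contexts $S ::= \langle\cdot\rangle\mid S[x\backslash u]$. Weak contexts $W ::= \langle\cdot\rangle \mid W\,t \mid t\,W \mid t[x\backslash W] \mid W[x\backslash u]$. For a class of contexts $K$, $K\langle\langle t\rangle\rangle$ is plugging without capture of free variables of $t$. Root rules: $S\langle\lambda x.t\rangle u\mapsto_m S\langle t[x\backslash u]\rangle$; $K\langle\langle x\rangle\rangle[x\backslash u]\mapsto_{e_K} K\langle\langle u\rangle\rangle[x\backslash u]$; $t[x\backslash S\langle v\rangle]\mapsto_{gcv} S\langle t\rangle$ if $x\notin\mathrm{fv}(t)$. $\to_w$ is the union of the closures under weak contexts of $\mapsto_m$, $\mapsto_{e_W}$ ($K$ = weak contexts), $\mapsto_{gcv}$; $\to^h$ denotes exactly $h$ steps. Call-by-silly strategy: answers $a ::= v\mid a[x\backslash a']$; name contexts $N ::= \langle\cdot\rangle\mid N t\mid N[x\backslash t]$; auxiliary contexts $A ::= \langle\cdot\rangle\mid a[x\backslash A]\mid A[x\backslash t]$; silly contexts $Y ::= A\langle N\rangle$; $\to_{ym} := Y\langle\mapsto_m\rangle$; $\to_{yeAY} := A\langle\mapsto_{e_Y}\rangle$;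 $\to_{yeYN} := Y\langle\mapsto_{e_N}\rangle$; $\to_{ygcv}:=Y\langle\mapsto_{gcv}\rangle$; $\to_y$ is their union. Strict answers: $a_s ::= v\mid a_s[x\backslash a_s']$ with $x\in\mathrm{fv}(a_s)$. *)

theory Defs
  imports Main
begin

text \<open>Terms up to alpha-equivalence, represented with de Bruijn indices.
  Sub t u stands for the explicit substitution t[x\u], where x is bound in t
  (index 0 in t).\<close>

datatype trm = Var nat | Lam trm | App trm trm | Sub trm trm

fun lift :: "nat \<Rightarrow> nat \<Rightarrow> trm \<Rightarrow> trm" where
  "lift k c (Var i) = (if i < c then Var i else Var (i + k))"
| "lift k c (Lam t) = Lam (lift k (Suc c) t)"
| "lift k c (App t u) = App (lift k c t) (lift k c u)"
| "lift k c (Sub t u) = Sub (lift k (Suc c) t) (lift k c u)"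

text \<open>lower c t: remove the (unused) free index c, decrementing larger ones.\<close>
fun lower :: "nat \<Rightarrow> trm \<Rightarrow> trm" where
  "lower c (Var i) = (if i < c then Var i else Var (i - 1))"
| "lower c (Lam t) = Lam (lower (Suc c) t)"
| "lower c (App t u) = App (lower c t) (lower c u)"
| "lower c (Sub t u) = Sub (lower (Suc c) t) (lower c u)"

fun occ :: "nat \<Rightarrow> trm \<Rightarrow> bool" where
  "occ c (Var i) = (i = c)"
| "occ c (Lam t) = occ (Suc c) t"
| "occ c (App t u) = (occ c t \<or> occ c u)"
| "occ c (Sub t u) = (occ (Suc c) t \<or> occ c u)"

definition closed :: "trm \<Rightarrow> bool" where
  "closed t \<longleftrightarrow> (\<forall>i. \<not> occ i t)"

fun is_value :: "trm \<Rightarrow> bool" where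
  "is_value (Lam t) = True"
| "is_value _ = False"

text \<open>Substitution contexts S: a list [u1,...,un] denotes
  <.>[xn\un]...[x1\u1] (head = outermost substitution).\<close>
fun plugS :: "trm list \<Rightarrow> trm \<Rightarrow> trm" where
  "plugS [] t = t"
| "plugS (u # us) t = Sub (plugS us t) u"

datatype wctx =
    WHole
  | WAppL wctx trm
  | WAppR trm wctx
  | WSubR trm wctx
  | WSubL wctx trm

fun plugW :: "wctx \<Rightarrow> trm \<Rightarrow> trm" where
  "plugW WHole s = s"
| "plugW (WAppL W t) s = App (plugW W s) t"
| "plugW (WAppR t W) s = App t (plugW W s)"
| "plugW (WSubR t W) s = Sub t (plugW W s)"
| "plugW (WSubL W u) s = Sub (plugW W s) u"

fun depthW :: "wctx \<Rightarrow> nat" where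
  "depthW WHole = 0"
| "depthW (WAppL W t) = depthW W"
| "depthW (WAppR t W) = depthW W"
| "depthW (WSubR t W) = depthW W"
| "depthW (WSubL W u) = Suc (depthW W)"

fun compW :: "wctx \<Rightarrow> wctx \<Rightarrow> wctx" where
  "compW WHole K = K"
| "compW (WAppL W t) K = WAppL (compW W K) t"
| "compW (WAppR t W) K = WAppR t (compW W K)"
| "compW (WSubR t W) K = WSubR t (compW W K)"
| "compW (WSubL W u) K = WSubL (compW W K) u"

fun is_answer :: "trm \<Rightarrow> bool" where
  "is_answer (Lam t) = True"
| "is_answer (Sub a a') = (is_answer a \<and> is_answer a')"
| "is_answer _ = False"

fun strict_answer :: "trm \<Rightarrow> bool" where
  "strict_answer (Lam t) = True"
| "strict_answer (Sub a a') = (strict_answer a \<and> strict_answer a' \<and> occ 0 a)"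
| "strict_answer _ = False"

fun is_N :: "wctx \<Rightarrow> bool" where
  "is_N WHole = True"
| "is_N (WAppL N t) = is_N N"
| "is_N (WSubL N t) = is_N N"
| "is_N _ = False"

fun is_A :: "wctx \<Rightarrow> bool" where
  "is_A WHole = True"
| "is_A (WSubR a A) = (is_answer a \<and> is_A A)"
| "is_A (WSubL A t) = is_A A"
| "is_A _ = False"

definition is_Y :: "wctx \<Rightarrow> bool" where
  "is_Y Y \<longleftrightarrow> (\<exists>A N. is_A A \<and> is_N N \<and> Y = compW A N)"

definition is_W :: "wctx \<Rightarrow> bool" where
  "is_W W \<longleftrightarrow> True"

inductive root_m :: "trm \<Rightarrow> trm \<Rightarrow> bool" where
  "root_m (App (plugS S (Lam t)) u) (plugS S (Sub t (lift (length S) 0 u)))"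

text \<open>K<<x>>[x\u] -> K<<u>>[x\u] for K in the class P.\<close>
inductive root_e :: "(wctx \<Rightarrow> bool) \<Rightarrow> trm \<Rightarrow> trm \<Rightarrow> bool" for P where
  "P K \<Longrightarrow> root_e P (Sub (plugW K (Var (depthW K))) u)
                     (Sub (plugW K (lift (Suc (depthW K)) 0 u)) u)"

inductive root_gcv :: "trm \<Rightarrow> trm \<Rightarrow> bool" where
  "is_value v \<Longrightarrow> \<not> occ 0 t \<Longrightarrow>
   root_gcv (Sub t (plugS S v)) (plugS S (lift (length S) 0 (lower 0 t)))"

inductive ctx_closure :: "(wctx \<Rightarrow> bool) \<Rightarrow> (trm \<Rightarrow> trm \<Rightarrow> bool) \<Rightarrow> trm \<Rightarrow> trm \<Rightarrow> bool"
  for P R where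
  "P C \<Longrightarrow> R t t' \<Longrightarrow> ctx_closure P R (plugW C t) (plugW C t')"

definition w_step :: "trm \<Rightarrow> trm \<Rightarrow> bool" where
  "w_step t t' \<longleftrightarrow> ctx_closure is_W root_m t t' \<or> ctx_closure is_W (root_e is_W) t t'
                    \<or> ctx_closure is_W root_gcv t t'"

definition y_step :: "trm \<Rightarrow> trm \<Rightarrow> bool" where
  "y_step t t' \<longleftrightarrow> ctx_closure is_Y root_m t t' \<or> ctx_closure is_A (root_e is_Y) t t'
                    \<or> ctx_closure is_Y (root_e is_N) t t' \<or> ctx_closure is_Y root_gcv t t'"

end

theory Submission
  imports Defs
begin


section \<open>Basic de Bruijn lemmas\<close>

lemma occ_lift: "occ j (lift k c u) \<longleftrightarrow> (j < c \<and> occ j u) \<or> (c + k \<le> j \<and> occ (j - k) u)"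
  by (induction u arbitrary: j c) (auto simp: Suc_diff_le)

lemma occ_lower: "\<not> occ c u \<Longrightarrow> occ j (lower c u) \<longleftrightarrow> (j < c \<and> occ j u) \<or> (c \<le> j \<and> occ (Suc j) u)"
  by (induction u arbitrary: j c) (auto simp: Suc_diff_le)

lemma lift_lift1: "c0 \<le> c \<Longrightarrow> lift k (c + m) (lift m c0 u) = lift m c0 (lift k c u)"
  apply (induction u arbitrary: c c0) apply auto apply (metis Suc_le_mono add_Suc)+ done

lemma lift_lift2: "c0 \<le> c \<Longrightarrow> c \<le> c0 + m \<Longrightarrow> lift k c (lift m c0 u) = lift (m + k) c0 u"
  by (induction u arbitrary: c c0) auto

lemma lift0[simp]: "lift 0 c u = u"
  by (induction u arbitrary: c) auto

lemma lower_lift1: "c0 \<le> c \<Longrightarrow> c < c0 + k \<Longrightarrow> lower c (lift k c0 w) = lift (k - 1) c0 w"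
  by (induction w arbitrary: c c0) auto

lemma lower_lift2: "\<not> occ c y \<Longrightarrow> c0 \<le> c \<Longrightarrow> lower (c + m) (lift m c0 y) = lift m c0 (lower c y)"
  apply (induction y arbitrary: c c0) apply auto apply (metis Suc_le_mono add_Suc)+ done

lemma lower_lift3: "\<not> occ c0 b \<Longrightarrow> c0 \<le> c \<Longrightarrow> lower c0 (lift k (Suc c) b) = lift k c (lower c0 b)"
  by (induction b arbitrary: c c0) auto

lemma lower_lift_id: "lower c (lift 1 c u) = u"
  by (induction u arbitrary: c) auto



fun sval :: "trm \<Rightarrow> bool" where
  "sval (Lam b) = True"
| "sval (Sub s w) = sval s"
| "sval _ = False"

fun mctr :: "trm \<Rightarrow> trm \<Rightarrow> trm" where
  "mctr (Lam b) u = Sub b u"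
| "mctr (Sub s w) u = Sub (mctr s (lift 1 0 u)) w"
| "mctr x u = App x u"

fun gc :: "trm \<Rightarrow> trm \<Rightarrow> trm" where
  "gc y (Sub s w) = Sub (gc (lift 1 0 y) s) w"
| "gc y _ = y"

fun slen :: "trm \<Rightarrow> nat" where
  "slen (Sub s w) = Suc (slen s)"
| "slen _ = 0"

fun liftW :: "nat \<Rightarrow> nat \<Rightarrow> wctx \<Rightarrow> wctx" where
  "liftW k c WHole = WHole"
| "liftW k c (WAppL K t) = WAppL (liftW k c K) (lift k c t)"
| "liftW k c (WAppR t K) = WAppR (lift k c t) (liftW k c K)"
| "liftW k c (WSubR t K) = WSubR (lift k (Suc c) t) (liftW k c K)"
| "liftW k c (WSubL K u) = WSubL (liftW k (Suc c) K) (lift k c u)"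

fun lowerW :: "nat \<Rightarrow> wctx \<Rightarrow> wctx" where
  "lowerW c WHole = WHole"
| "lowerW c (WAppL K t) = WAppL (lowerW c K) (lower c t)"
| "lowerW c (WAppR t K) = WAppR (lower c t) (lowerW c K)"
| "lowerW c (WSubR t K) = WSubR (lower (Suc c) t) (lowerW c K)"
| "lowerW c (WSubL K u) = WSubL (lowerW (Suc c) K) (lower c u)"

fun gcW :: "wctx \<Rightarrow> trm \<Rightarrow> wctx" where
  "gcW K (Sub s w) = WSubL (gcW (liftW 1 0 K) s) w"
| "gcW K _ = K"

fun occW :: "nat \<Rightarrow> wctx \<Rightarrow> bool" where
  "occW c WHole = False"
| "occW c (WAppL K t) = (occW c K \<or> occ c t)"
| "occW c (WAppR t K) = (occ c t \<or> occW c K)"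
| "occW c (WSubR t K) = (occ (Suc c) t \<or> occW c K)"
| "occW c (WSubL K u) = (occW (Suc c) K \<or> occ c u)"

fun shiftE :: "trm \<Rightarrow> (nat \<Rightarrow> trm option) \<Rightarrow> nat \<Rightarrow> trm option" where
  "shiftE u E 0 = Some u"
| "shiftE u E (Suc n) = E n"

fun envW :: "wctx \<Rightarrow> (nat \<Rightarrow> trm option) \<Rightarrow> nat \<Rightarrow> trm option" where
  "envW WHole E = E"
| "envW (WAppL K t) E = envW K E"
| "envW (WAppR t K) E = envW K E"
| "envW (WSubR t K) E = envW K E"
| "envW (WSubL K u) E = envW K (shiftE u E)"

lemma depthW_liftW[simp]: "depthW (liftW k c K) = depthW K"
  by (induction K arbitrary: c) auto

lemma depthW_lowerW[simp]: "depthW (lowerW c K) = depthW K"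
  by (induction K arbitrary: c) auto

lemma depthW_gcW[simp]: "depthW (gcW K u) = depthW K + slen u"
  by (induction u arbitrary: K) auto

lemma lift_plugW: "lift k c (plugW K s) = plugW (liftW k c K) (lift k (c + depthW K) s)"
  by (induction K arbitrary: c) auto

lemma lower_plugW: "lower c (plugW K s) = plugW (lowerW c K) (lower (c + depthW K) s)"
  by (induction K arbitrary: c) auto

lemma occ_plugW: "occ c (plugW K s) = (occW c K \<or> occ (c + depthW K) s)"
  by (induction K arbitrary: c) auto

lemma envW_depth: "envW K E (j + depthW K) = E j"
proof (induction K arbitrary: E j)
  case (WSubL K u)
  have "envW K (shiftE u E) (Suc j + depthW K) = shiftE u E (Suc j)" by (rule WSubL.IH)
  then show ?case by simp
qed auto

lemma plugW_compW: "plugW (compW C K) s = plugW C (plugW K s)"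
  by (induction C) auto

lemma depthW_compW[simp]: "depthW (compW C K) = depthW C + depthW K"
  by (induction C) auto

lemma slen_lift[simp]: "slen (lift k c u) = slen u"
  by (induction u arbitrary: c) auto

lemma sval_lift[simp]: "sval (lift k c u) = sval u"
  by (induction u arbitrary: c) auto

lemma sval_lower[simp]: "sval (lower c u) = sval u"
  by (induction u arbitrary: c) auto

lemma sval_plugS: "sval x \<longleftrightarrow> (\<exists>S b. x = plugS S (Lam b))"
proof
  assume "sval x" then show "\<exists>S b. x = plugS S (Lam b)"
  proof (induction x)
    case (Lam b) then show ?case by (metis plugS.simps(1))
  next
    case (Sub s w) then obtain S b where "s = plugS S (Lam b)" by auto
    then have "Sub s w = plugS (w # S) (Lam b)" by simp
    then show ?case by blast
  qed auto
next
  assume "\<exists>S b. x = plugS S (Lam b)" then obtain S b where "x = plugS S (Lam b)" by blast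
  then show "sval x" by (induction S arbitrary: x) auto
qed

lemma length_slen: "slen (plugS S (Lam b)) = length S"
  by (induction S) auto

lemma lift_mctr: "lift k c (mctr x u) = mctr (lift k c x) (lift k c u)"
  by (induction x u arbitrary: c rule: mctr.induct) (auto simp: lift_lift1[of 0 _ _ 1, simplified])

lemma lift_gc: "lift k c (gc y u) = gc (lift k c y) (lift k c u)"
  by (induction y u arbitrary: c rule: gc.induct) (auto simp: lift_lift1[of 0 _ _ 1, simplified])



lemma mctr_plugS: "mctr (plugS S (Lam b)) u = plugS S (Sub b (lift (length S) 0 u))"
  by (induction S arbitrary: u) (auto simp: lift_lift2)

lemma gc_plugS: "gc y (plugS S (Lam v)) = plugS S (lift (length S) 0 y)"
  by (induction S arbitrary: y) (auto simp: lift_lift2)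

lemma occ_mctr[simp]: "occ j (mctr x u) = (occ j x \<or> occ j u)"
  by (induction x u arbitrary: j rule: mctr.induct) (auto simp: occ_lift)

lemma occ_gc: "occ j (gc y s) \<Longrightarrow> occ j s \<or> occ j y"
proof (induction y s arbitrary: j rule: gc.induct)
  case (1 y s w)
  then show ?case using "1.IH"[of "Suc j"] by (auto simp: occ_lift)
qed auto

lemma lower_mctr: "\<not> occ c x \<Longrightarrow> \<not> occ c u \<Longrightarrow> lower c (mctr x u) = mctr (lower c x) (lower c u)"
  by (induction x u arbitrary: c rule: mctr.induct)
     (auto simp: occ_lift lower_lift2[of _ _ 0 1, simplified])

lemma lower_gc: "\<not> occ c y \<Longrightarrow> \<not> occ c u \<Longrightarrow> lower c (gc y u) = gc (lower c y) (lower c u)"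
  by (induction y u arbitrary: c rule: gc.induct)
     (auto simp: occ_lift lower_lift2[of _ _ 0 1, simplified])

lemma gc_gc: "gc (gc x A) B = gc x (gc A B)"
  by (induction A B arbitrary: x rule: gc.induct) (auto simp: lift_gc)

lemma gc_gc': "gc (gc x A) B = gc x (gc A B)"
proof (induction B arbitrary: x A)
  case (Sub s w)
  then show ?case by (simp add: lift_gc)
qed auto

lemma gc_mctr: "gc (mctr c p) B = mctr (gc c B) p"
  by (induction B arbitrary: c p) (auto simp: lift_mctr)

lemma sval_gc[simp]: "sval (gc y u) = sval y"
  by (induction y u rule: gc.induct) auto

lemma slen_gc: "slen (gc y u) = slen u + slen y"
  by (induction y u rule: gc.induct) auto

lemma gc_plugW: "gc (plugW K y) u = plugW (gcW K u) (lift (slen u) (depthW K) y)"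
proof (induction u arbitrary: K y)
  case (Sub s w)
  have "gc (plugW K y) (Sub s w) = Sub (gc (plugW (liftW 1 0 K) (lift 1 (depthW K) y)) s) w"
    by (simp add: lift_plugW)
  also have "\<dots> = Sub (plugW (gcW (liftW 1 0 K) s) (lift (slen s) (depthW K) (lift 1 (depthW K) y))) w"
    using Sub.IH(1) by simp
  also have "lift (slen s) (depthW K) (lift 1 (depthW K) y) = lift (Suc (slen s)) (depthW K) y"
    by (simp add: lift_lift2)
  finally show ?case by simp
qed auto

lemma is_N_liftW[simp]: "is_N (liftW k c K) = is_N K"
  by (induction K arbitrary: c) auto

lemma is_N_lowerW[simp]: "is_N (lowerW c K) = is_N K"
  by (induction K arbitrary: c) auto

lemma is_N_gcW[simp]: "is_N (gcW K u) = is_N K"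
  by (induction K u rule: gcW.induct) auto

datatype result = RStep trm | RHV wctx nat | RVal

fun res :: "bool \<Rightarrow> trm \<Rightarrow> result" where
  "res a (Var i) = RHV WHole i"
| "res a (Lam b) = RVal"
| "res a (App p q) = (case res False p of RVal \<Rightarrow> RStep (mctr p q)
      | RHV K i \<Rightarrow> RHV (WAppL K q) i | RStep s \<Rightarrow> RStep (App s q))"
| "res a (Sub b u) = (case res a b of RStep s \<Rightarrow> RStep (Sub s u)
      | RHV K i \<Rightarrow> (case i of 0 \<Rightarrow> RStep (Sub (plugW K (lift (Suc (depthW K)) 0 u)) u)
                           | Suc j \<Rightarrow> RHV (WSubL K u) j)
      | RVal \<Rightarrow> (if \<not> a then RVal else if \<not> occ 0 b \<and> sval u then RStep (gc (lower 0 b) u)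
                else (case res True u of RStep s \<Rightarrow> RStep (Sub b s)
                        | RHV K i \<Rightarrow> RHV (WSubR b K) i | RVal \<Rightarrow> RVal)))"

lemma res_False_Val: "res False x = RVal \<longleftrightarrow> sval x"
  by (induction x) (auto split: result.split nat.split)

lemma res_HV_plug: "res a x = RHV K i \<Longrightarrow> x = plugW K (Var (i + depthW K))"
  by (induction x arbitrary: a K i) (auto split: result.splits nat.splits if_splits, fastforce)

lemma res_HV_occ: "res a x = RHV K i \<Longrightarrow> occ i x"
  by (drule res_HV_plug) (simp add: occ_plugW)

lemma strict_sval: "strict_answer x \<Longrightarrow> sval x"
  by (induction x) auto

lemma strict_answer: "strict_answer x \<Longrightarrow> is_answer x"
  by (induction x) auto

lemma res_Val_strict: "res True x = RVal \<Longrightarrow> strict_answer x"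
  by (induction x) (auto split: result.splits nat.splits if_splits dest: strict_sval)

lemma strict_res: "strict_answer x \<Longrightarrow> res True x = RVal"
  by (induction x) auto

lemma res_HV_N: "res a x = RHV K i \<Longrightarrow> \<not> a \<or> \<not> sval x \<Longrightarrow> is_N K"
  by (induction x arbitrary: a K i) (auto split: result.splits nat.splits if_splits dest: res_Val_strict strict_sval)

lemma is_Y_N: "is_N N \<Longrightarrow> is_Y N"
  unfolding is_Y_def by (rule exI[of _ WHole]) auto

lemma is_Y_SubL: "is_Y Y \<Longrightarrow> is_Y (WSubL Y u)"
proof -
  assume "is_Y Y"
  then obtain A N where "is_A A" "is_N N" "Y = compW A N" unfolding is_Y_def by blast
  then have "is_A (WSubL A u) \<and> is_N N \<and> WSubL Y u = compW (WSubL A u) N" by simp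
  then show ?thesis unfolding is_Y_def by blast
qed

lemma is_Y_SubR: "is_Y Y \<Longrightarrow> is_answer b \<Longrightarrow> is_Y (WSubR b Y)"
proof -
  assume "is_Y Y" "is_answer b"
  then obtain A N where "is_A A" "is_N N" "Y = compW A N" unfolding is_Y_def by blast
  then have "is_A (WSubR b A) \<and> is_N N \<and> WSubR b Y = compW (WSubR b A) N" using \<open>is_answer b\<close> by simp
  then show ?thesis unfolding is_Y_def by blast
qed

lemma res_HV_Y: "res True x = RHV K i \<Longrightarrow> is_Y K"
proof (induction x arbitrary: K i)
  case (App p q)
  then show ?case by (auto split: result.splits intro!: is_Y_N dest: res_HV_N)
next
  case (Sub b u)
  then show ?case
    by (auto split: result.splits nat.splits if_splits intro: is_Y_SubL is_Y_SubR
        dest: res_Val_strict strict_answer)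
qed (auto intro: is_Y_N)

fun lres :: "nat \<Rightarrow> nat \<Rightarrow> result \<Rightarrow> result" where
  "lres k c (RStep s) = RStep (lift k c s)"
| "lres k c (RHV K i) = RHV (liftW k c K) (if i < c then i else i + k)"
| "lres k c RVal = RVal"

lemma lift_lift_e: "lift k (Suc (c + d)) (lift (Suc d) 0 u) = lift (Suc d) 0 (lift k c u)"
  using lift_lift1[of 0 c k "Suc d" u] by simp

lemma occ_lift_0: "occ 0 (lift k (Suc c) b) = occ 0 b"
  by (simp add: occ_lift)

lemma res_lift: "res a (lift k c x) = lres k c (res a x)"
proof (induction x arbitrary: a c)
  case (App p q)
  then show ?case by (auto split: result.splits simp: lift_mctr)
next
  case (Sub b u)
  then show ?case
    by (auto split: result.splits nat.splits if_splits simp: lift_plugW lift_lift_e occ_lift_0 lift_gc lower_lift3)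
qed auto



fun lowres :: "nat \<Rightarrow> result \<Rightarrow> result" where
  "lowres c (RStep s) = RStep (lower c s)"
| "lowres c (RHV K i) = RHV (lowerW c K) (if i < c then i else i - 1)"
| "lowres c RVal = RVal"

lemma lower_lower: "\<not> occ c0 b \<Longrightarrow> \<not> occ (Suc c) b \<Longrightarrow> c0 \<le> c \<Longrightarrow>
    lower c (lower c0 b) = lower c0 (lower (Suc c) b)"
  by (induction b arbitrary: c c0) auto

lemma lower_lift_e: "\<not> occ c u \<Longrightarrow> lower (Suc (c + d)) (lift (Suc d) 0 u) = lift (Suc d) 0 (lower c u)"
  using lower_lift2[of c u 0 "Suc d"] by simp

lemma res_lower: "\<not> occ c x \<Longrightarrow> res a (lower c x) = lowres c (res a x)"
proof (induction x arbitrary: a c)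
  case (App p q)
  then show ?case by (auto split: result.splits simp: lower_mctr)
next
  case (Sub b u)
  have nb: "\<not> occ (Suc c) b" and nu: "\<not> occ c u" using Sub.prems by auto
  show ?case
  proof (cases "res a b")
    case (RStep s)
    then show ?thesis using Sub.IH(1)[OF nb, of a] by simp
  next
    case (RHV K i)
    then have "i \<noteq> Suc c" using nb res_HV_occ by blast
    then show ?thesis using RHV Sub.IH(1)[OF nb, of a] nu
      by (cases i) (auto simp: lower_plugW lower_lift_e split: nat.split)
  next
    case RVal
    note bv = RVal
    have rb: "res a (lower (Suc c) b) = RVal" using Sub.IH(1)[OF nb, of a] RVal by simp
    show ?thesis
    proof (cases a)
      case False then show ?thesis using rb bv by simp
    next
      case True
      have o0: "occ 0 (lower (Suc c) b) = occ 0 b" using nb by (simp add: occ_lower)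
      show ?thesis
      proof (cases "\<not> occ 0 b \<and> sval u")
        case True
        have "\<not> occ c (lower 0 b)" using nb True by (simp add: occ_lower)
        then have "lower c (gc (lower 0 b) u) = gc (lower c (lower 0 b)) (lower c u)"
          using nu by (simp add: lower_gc)
        also have "lower c (lower 0 b) = lower 0 (lower (Suc c) b)"
          using nb True by (simp add: lower_lower)
        finally show ?thesis using True \<open>a\<close> rb bv o0 by simp
      next
        case False
        then show ?thesis using \<open>a\<close> rb bv o0 Sub.IH(2)[OF nu, of True]
          by (auto split: result.splits)
      qed
    qed
  qed
qed auto



lemma res_gc: "sval u \<Longrightarrow> (res a x = RStep s \<longrightarrow> res a (gc x u) = RStep (gc s u)) \<and>
   (res a x = RHV K i \<longrightarrow> res a (gc x u) = RHV (gcW K u) i)"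
proof (induction u arbitrary: x s K i)
  case (Sub s0 w)
  show ?case
  proof (intro conjI impI)
    assume "res a x = RStep s"
    then have "res a (lift 1 0 x) = RStep (lift 1 0 s)" by (simp add: res_lift)
    then show "res a (gc x (Sub s0 w)) = RStep (gc s (Sub s0 w))" using Sub by simp
  next
    assume "res a x = RHV K i"
    then have "res a (lift 1 0 x) = RHV (liftW 1 0 K) (Suc i)" by (simp add: res_lift)
    then show "res a (gc x (Sub s0 w)) = RHV (gcW K (Sub s0 w)) i" using Sub by simp
  qed
qed auto

lemma res_gc_lower_step: "sval u \<Longrightarrow> \<not> occ 0 c \<Longrightarrow> res a c = RStep s \<Longrightarrow>
   res a (gc (lower 0 c) u) = RStep (gc (lower 0 s) u)"
  using res_gc[of u a "lower 0 c"] res_lower[of 0 c a] by simp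

lemma res_gc_lower_HV: "sval u \<Longrightarrow> \<not> occ 0 c \<Longrightarrow> res a c = RHV K (Suc i) \<Longrightarrow>
   res a (gc (lower 0 c) u) = RHV (gcW (lowerW 0 K) u) i"
  using res_gc[of u a "lower 0 c"] res_lower[of 0 c a] by simp

section \<open>Soundness\<close>

lemma ctx_lift: "ctx_closure P R x y \<Longrightarrow> (\<And>K. P K \<Longrightarrow> P' (compW C K)) \<Longrightarrow>
   ctx_closure P' R (plugW C x) (plugW C y)"
proof (induction rule: ctx_closure.induct)
  case (1 K t t')
  then have "ctx_closure P' R (plugW (compW C K) t) (plugW (compW C K) t')"
    by (intro ctx_closure.intros) auto
  then show ?case by (simp add: plugW_compW)
qed

lemma ctx_root: "P WHole \<Longrightarrow> R x y \<Longrightarrow> ctx_closure P R x y"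
  using ctx_closure.intros[of P WHole R x y] by simp

lemma root_m_mctr: "sval x \<Longrightarrow> root_m (App x u) (mctr x u)"
  by (auto simp: sval_plugS mctr_plugS intro: root_m.intros)

lemma root_gcv_gc: "sval u \<Longrightarrow> \<not> occ 0 b \<Longrightarrow> root_gcv (Sub b u) (gc (lower 0 b) u)"
proof -
  assume "sval u" "\<not> occ 0 b"
  then obtain S v where "u = plugS S (Lam v)" by (auto simp: sval_plugS)
  then show ?thesis using \<open>\<not> occ 0 b\<close> root_gcv.intros[of "Lam v" b S] by (simp add: gc_plugS)
qed

lemma root_e_res: "is_K K \<Longrightarrow> root_e is_K (Sub (plugW K (Var (depthW K))) u)
   (Sub (plugW K (lift (Suc (depthW K)) 0 u)) u)"
  by (rule root_e.intros)

definition nstepR :: "trm \<Rightarrow> trm \<Rightarrow> bool" where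
  "nstepR t t' \<longleftrightarrow> ctx_closure is_N root_m t t' \<or> ctx_closure is_N (root_e is_N) t t'"

lemma nstepR_lift: "nstepR x y \<Longrightarrow> (\<And>K. is_N K \<Longrightarrow> is_N (compW C K)) \<Longrightarrow>
   nstepR (plugW C x) (plugW C y)"
  unfolding nstepR_def using ctx_lift by blast

lemma res_sound_N: "res False t = RStep t' \<Longrightarrow> nstepR t t'"
proof (induction t arbitrary: t')
  case (App p q)
  show ?case
  proof (cases "res False p")
    case (RStep s)
    then have "t' = App s q" using App.prems by simp
    then show ?thesis using nstepR_lift[OF App.IH(1)[OF RStep], of "WAppL WHole q"] by simp
  next
    case (RHV K i) then show ?thesis using App.prems by simp
  next
    case RVal
    then have "t' = mctr p q" "sval p" using App.prems by (simp, simp add: res_False_Val)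
    then show ?thesis unfolding nstepR_def by (auto intro!: ctx_root root_m_mctr)
  qed
next
  case (Sub b u)
  show ?case
  proof (cases "res False b")
    case (RStep s)
    then have "t' = Sub s u" using Sub.prems by simp
    then show ?thesis using nstepR_lift[OF Sub.IH(1)[OF RStep], of "WSubL WHole u"] by simp
  next
    case (RHV K i)
    then have N: "is_N K" using res_HV_N by blast
    show ?thesis
    proof (cases i)
      case 0
      then have "t' = Sub (plugW K (lift (Suc (depthW K)) 0 u)) u" "b = plugW K (Var (depthW K))"
        using Sub.prems RHV res_HV_plug[OF RHV] by auto
      then show ?thesis unfolding nstepR_def using N by (auto intro!: ctx_root root_e.intros)
    next
      case (Suc j) then show ?thesis using Sub.prems RHV by simp
    qed
  next
    case RVal then show ?thesis using Sub.prems by simp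
  qed
qed auto

lemma nstepR_y: "nstepR t t' \<Longrightarrow> y_step t t'"
proof -
  have m: "ctx_closure is_N R x y \<Longrightarrow> ctx_closure is_Y R x y" for R x y
    by (induction rule: ctx_closure.induct) (auto intro!: ctx_closure.intros is_Y_N)
  assume "nstepR t t'" then show ?thesis unfolding nstepR_def y_step_def using m by blast
qed

lemma y_step_lift: "y_step x y \<Longrightarrow> (\<And>K. is_Y K \<Longrightarrow> is_Y (compW C K)) \<Longrightarrow>
   (\<And>K. is_A K \<Longrightarrow> is_A (compW C K)) \<Longrightarrow> y_step (plugW C x) (plugW C y)"
  unfolding y_step_def using ctx_lift by metis

lemma res_sound: "res True t = RStep t' \<Longrightarrow> y_step t t'"
proof (induction t arbitrary: t')
  case (App p q)
  then have "res False (App p q) = RStep t'" by simp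
  then show ?case using res_sound_N nstepR_y by blast
next
  case (Sub b u)
  show ?case
  proof (cases "res True b")
    case (RStep s)
    then have "t' = Sub s u" using Sub.prems by simp
    then show ?thesis using y_step_lift[OF Sub.IH(1)[OF RStep], of "WSubL WHole u"] is_Y_SubL by simp
  next
    case (RHV K i)
    then have Y: "is_Y K" using res_HV_Y by blast
    show ?thesis
    proof (cases i)
      case 0
      then have "t' = Sub (plugW K (lift (Suc (depthW K)) 0 u)) u" "b = plugW K (Var (depthW K))"
        using Sub.prems RHV res_HV_plug[OF RHV] by auto
      then show ?thesis unfolding y_step_def using Y by (auto intro!: ctx_root root_e.intros)
    next
      case (Suc j) then show ?thesis using Sub.prems RHV by simp
    qed
  next
    case RVal
    then have ans: "is_answer b" using res_Val_strict strict_answer by blast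
    show ?thesis
    proof (cases "\<not> occ 0 b \<and> sval u")
      case True
      then have "t' = gc (lower 0 b) u" using Sub.prems RVal by simp
      then show ?thesis unfolding y_step_def using True
        by (auto intro!: ctx_root root_gcv_gc is_Y_N)
    next
      case False
      show ?thesis
      proof (cases "res True u")
        case (RStep s)
        then have "t' = Sub b s" using Sub.prems RVal False by simp
        then show ?thesis using y_step_lift[OF Sub.IH(2)[OF RStep], of "WSubR b WHole"] is_Y_SubR ans
          by simp
      next
        case (RHV K i) then show ?thesis using Sub.prems RVal False by simp
      next
        case RVal then show ?thesis using Sub.prems \<open>res True b = RVal\<close> False by simp
      qed
    qed
  qed
qed auto

lemma y_w: "y_step t t' \<Longrightarrow> w_step t t'"
proof -
  have m: "ctx_closure P R x y \<Longrightarrow> ctx_closure is_W R x y" for P R x y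
    by (induction rule: ctx_closure.induct) (auto intro!: ctx_closure.intros simp: is_W_def)
  have e: "root_e P x y \<Longrightarrow> root_e is_W x y" for P x y
    by (induction rule: root_e.induct) (auto intro!: root_e.intros simp: is_W_def)
  have m2: "ctx_closure P (root_e Q) x y \<Longrightarrow> ctx_closure is_W (root_e is_W) x y" for P Q x y
    by (induction rule: ctx_closure.induct) (metis ctx_closure.intros e is_W_def)
  assume "y_step t t'" then show ?thesis unfolding y_step_def w_step_def using m m2 by blast
qed



lemma occ_ctx_mono: "(\<And>j. occ j y \<Longrightarrow> occ j x) \<Longrightarrow> occ c (plugW C y) \<Longrightarrow> occ c (plugW C x)"
  by (auto simp: occ_plugW)

lemma root_m_occ: "root_m t t' \<Longrightarrow> occ j t' \<Longrightarrow> occ j t"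
  by (induction rule: root_m.induct) (auto simp: mctr_plugS[symmetric])

lemma root_e_occ: "root_e P t t' \<Longrightarrow> occ j t' \<Longrightarrow> occ j t"
  by (induction rule: root_e.induct) (auto simp: occ_plugW occ_lift)

lemma root_gcv_occ: "root_gcv t t' \<Longrightarrow> occ j t' \<Longrightarrow> occ j t"
proof (induction rule: root_gcv.induct)
  case (1 v t S)
  then obtain b where v: "v = Lam b" by (cases v) auto
  then have "plugS S (lift (length S) 0 (lower 0 t)) = gc (lower 0 t) (plugS S v)"
    by (simp add: gc_plugS)
  then have "occ j (plugS S v) \<or> occ j (lower 0 t)" using 1 occ_gc by metis
  then show ?case using 1 by (auto simp: occ_lower)
qed

lemma w_step_occ: "w_step t t' \<Longrightarrow> occ j t' \<Longrightarrow> occ j t"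
proof -
  have g: "ctx_closure P R t t' \<Longrightarrow> (\<And>x y j. R x y \<Longrightarrow> occ j y \<Longrightarrow> occ j x) \<Longrightarrow> occ j t' \<Longrightarrow> occ j t"
    for P R
    by (induction rule: ctx_closure.induct) (metis occ_ctx_mono)
  assume w: "w_step t t'" and o: "occ j t'"
  from w consider "ctx_closure is_W root_m t t'" | "ctx_closure is_W (root_e is_W) t t'"
    | "ctx_closure is_W root_gcv t t'" unfolding w_step_def by blast
  then show ?thesis
  proof cases
    case 1 show ?thesis by (rule g[OF 1 _ o], erule root_m_occ, assumption)
  next
    case 2 show ?thesis by (rule g[OF 2 _ o], erule root_e_occ, assumption)
  next
    case 3 show ?thesis by (rule g[OF 3 _ o], erule root_gcv_occ, assumption)
  qed
qed

lemma w_step_closed: "w_step t t' \<Longrightarrow> closed t \<Longrightarrow> closed t'"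
  unfolding closed_def using w_step_occ by blast

lemma res_step_occ: "res a t = RStep t' \<Longrightarrow> occ j t' \<Longrightarrow> occ j t"
proof -
  assume h: "res a t = RStep t'" "occ j t'"
  show ?thesis
  proof (cases a)
    case True
    then have "res True t = RStep t'" using h by simp
    then show ?thesis using w_step_occ[OF y_w[OF res_sound]] h by blast
  next
    case False
    then have "res False t = RStep t'" using h by simp
    then show ?thesis using w_step_occ[OF y_w[OF nstepR_y[OF res_sound_N]]] h by blast
  qed
qed



inductive par :: "(nat \<Rightarrow> trm option) \<Rightarrow> trm \<Rightarrow> nat \<Rightarrow> trm \<Rightarrow> bool" where
  P0: "par E t 0 t"
| Pm: "sval x \<Longrightarrow> par E (App x u) 1 (mctr x u)"
| Pg: "sval u \<Longrightarrow> \<not> occ 0 b \<Longrightarrow> par E (gc (lower 0 b) u) n t2 \<Longrightarrow> par E (Sub b u) (Suc n) t2"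
| Pv: "E i = Some w \<Longrightarrow> par E (Var i) 1 (lift (Suc i) 0 w)"
| Pa: "par E p n1 p' \<Longrightarrow> par E q n2 q' \<Longrightarrow> par E (App p q) (n1 + n2) (App p' q')"
| Ps: "par (shiftE u E) b n1 b' \<Longrightarrow> par E u n2 u' \<Longrightarrow> par E (Sub b u) (n1 + n2) (Sub b' u')"

lemma par_ctx: "par (envW K E) x m y \<Longrightarrow> par E (plugW K x) m (plugW K y)"
proof (induction K arbitrary: E)
  case (WAppL K t)
  have "par E (plugW K x) m (plugW K y)" using WAppL by simp
  then show ?case using Pa[OF _ P0] by fastforce
next
  case (WAppR t K)
  have "par E (plugW K x) m (plugW K y)" using WAppR by simp
  then show ?case using Pa[OF P0] by fastforce
next
  case (WSubR t K)
  have "par E (plugW K x) m (plugW K y)" using WSubR by simp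
  then show ?case using Ps[OF P0] by fastforce
next
  case (WSubL K u)
  have "par (shiftE u E) (plugW K x) m (plugW K y)" using WSubL by simp
  then show ?case using Ps[OF _ P0] by fastforce
qed simp

lemma w_par: "w_step t t' \<Longrightarrow> par E t 1 t'"
proof -
  have g: "ctx_closure P R t t' \<Longrightarrow> (\<And>x y E. R x y \<Longrightarrow> par E x 1 y) \<Longrightarrow> par E t 1 t'" for P R E
    by (induction rule: ctx_closure.induct) (simp add: par_ctx)
  have m: "root_m x y \<Longrightarrow> par E x 1 y" for x y E
    by (induction rule: root_m.induct) (metis Pm mctr_plugS sval_plugS)
  have e: "root_e P x y \<Longrightarrow> par E x 1 y" for P x y E
  proof (induction rule: root_e.induct)
    case (1 K u)
    have "envW K (shiftE u E) (0 + depthW K) = Some u" by (simp only: envW_depth) simp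
    then have "par (envW K (shiftE u E)) (Var (depthW K)) 1 (lift (Suc (depthW K)) 0 u)"
      using Pv by simp
    then have "par (shiftE u E) (plugW K (Var (depthW K))) 1 (plugW K (lift (Suc (depthW K)) 0 u))"
      by (rule par_ctx)
    then show ?case using Ps[OF _ P0] by fastforce
  qed
  have gc: "root_gcv x y \<Longrightarrow> par E x 1 y" for x y E
  proof (induction rule: root_gcv.induct)
    case (1 v t S)
    then obtain b where v: "v = Lam b" by (cases v) auto
    have "sval (plugS S v)" using v sval_plugS by blast
    moreover have "gc (lower 0 t) (plugS S v) = plugS S (lift (length S) 0 (lower 0 t))"
      using v by (simp add: gc_plugS)
    ultimately show ?case using Pg[OF _ 1(2) P0] by fastforce
  qed
  assume "w_step t t'"
  then show ?thesis unfolding w_step_def using g m e gc by metis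
qed

lemma par_lift: "par F x m y \<Longrightarrow> (\<forall>j<c. G j = map_option (lift k (c - Suc j)) (F j)) \<Longrightarrow>
   (\<forall>j\<ge>c. G (j + k) = F j) \<Longrightarrow> par G (lift k c x) m (lift k c y)"
proof (induction arbitrary: G c rule: par.induct)
  case (P0 E t) show ?case by (rule par.P0)
next
  case (Pm x E u) then show ?case using par.Pm[of "lift k c x" G "lift k c u"] by (simp add: lift_mctr)
next
  case (Pg u b E n t2)
  have "gc (lower 0 (lift k (Suc c) b)) (lift k c u) = lift k c (gc (lower 0 b) u)"
    using Pg by (simp add: lower_lift3 lift_gc)
  moreover have "\<not> occ 0 (lift k (Suc c) b)" using Pg by (simp add: occ_lift)
  ultimately show ?case using Pg by (auto intro!: par.Pg)
next
  case (Pv E i w)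
  show ?case
  proof (cases "i < c")
    case True
    then have "G i = Some (lift k (c - Suc i) w)" using Pv by simp
    then have "par G (Var i) 1 (lift (Suc i) 0 (lift k (c - Suc i) w))" by (rule par.Pv)
    moreover have "lift k (c - Suc i + Suc i) (lift (Suc i) 0 w) = lift (Suc i) 0 (lift k (c - Suc i) w)"
      by (rule lift_lift1) simp
    ultimately show ?thesis using True by simp
  next
    case False
    then have "G (i + k) = Some w" using Pv by simp
    then have "par G (Var (i + k)) 1 (lift (Suc (i + k)) 0 w)" by (rule par.Pv)
    moreover have "lift k c (lift (Suc i) 0 w) = lift (Suc i + k) 0 w"
      using False by (simp add: lift_lift2)
    ultimately show ?thesis using False by simp
  qed
next
  case (Pa E p n1 p' q n2 q') then show ?case by (simp add: par.Pa)
next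
  case (Ps u E b n1 b' n2 u')
  have h1: "\<forall>j<Suc c. shiftE (lift k c u) G j = map_option (lift k (Suc c - Suc j)) (shiftE u E j)"
  proof (intro allI impI)
    fix j assume "j < Suc c" then show "shiftE (lift k c u) G j = map_option (lift k (Suc c - Suc j)) (shiftE u E j)"
      using Ps.prems(1) by (cases j) auto
  qed
  have h2: "\<forall>j\<ge>Suc c. shiftE (lift k c u) G (j + k) = shiftE u E j"
  proof (intro allI impI)
    fix j assume "Suc c \<le> j" then show "shiftE (lift k c u) G (j + k) = shiftE u E j"
      using Ps.prems(2) by (cases j) auto
  qed
  show ?case using Ps.IH(1)[OF h1 h2] Ps.IH(2)[OF Ps.prems] by (simp add: par.Ps)
qed

lemma par_lift0: "par F x m y \<Longrightarrow> (\<forall>j. G (j + k) = F j) \<Longrightarrow> par G (lift k 0 x) m (lift k 0 y)"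
  using par_lift[of F x m y 0 G k] by simp

lemma par_lift1: "par E x m y \<Longrightarrow> par (shiftE w E) (lift 1 0 x) m (lift 1 0 y)"
  by (rule par_lift0) auto

lemma strict_par: "par E t n t' \<Longrightarrow> strict_answer t \<Longrightarrow> n = 0 \<and> t' = t"
  by (induction rule: par.induct) auto

lemma par_sval: "par E x n y \<Longrightarrow> sval x \<Longrightarrow> sval y"
  by (induction rule: par.induct) auto



lemma lower_lift_id0[simp]: "lower 0 (lift (Suc 0) 0 u) = u"
  using lower_lift_id[of 0 u] by simp

lemma MC0: "sval p1 \<Longrightarrow> par E p2 n2 q2 \<Longrightarrow> par E (mctr p1 p2) n2 (mctr p1 q2)"
proof (induction p1 arbitrary: E p2 q2)
  case (Lam b) then show ?case using Ps[OF P0 Lam.prems(2)] by simp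
next
  case (Sub s w)
  have "par (shiftE w E) (mctr s (lift 1 0 p2)) n2 (mctr s (lift 1 0 q2))"
    using Sub.IH(1) Sub.prems par_lift1 by simp
  then show ?case using Ps[OF _ P0] by fastforce
qed auto

lemma MC: "par E p1 n1 q1 \<Longrightarrow> sval p1 \<Longrightarrow> par E p2 n2 q2 \<Longrightarrow> par E (mctr p1 p2) (n1 + n2) (mctr q1 q2)"
proof (induction arbitrary: p2 n2 q2 rule: par.induct)
  case (P0 E t) then show ?case using MC0 by simp
next
  case (Pg u c E n q)
  have sr: "sval (gc (lower 0 c) u)" using Pg by simp
  have IH: "par E (mctr (gc (lower 0 c) u) p2) (n + n2) (mctr q q2)" using Pg.IH[OF sr Pg.prems(2)] .
  have no: "\<not> occ 0 (mctr c (lift 1 0 p2))" using Pg by (simp add: occ_lift)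
  have "gc (lower 0 (mctr c (lift 1 0 p2))) u = gc (mctr (lower 0 c) (lower 0 (lift 1 0 p2))) u"
    using Pg by (simp add: lower_mctr occ_lift)
  also have "\<dots> = mctr (gc (lower 0 c) u) p2" by (simp add: lower_lift_id gc_mctr)
  finally have "par E (Sub (mctr c (lift 1 0 p2)) u) (Suc (n + n2)) (mctr q q2)"
    using par.Pg[OF Pg.hyps(1) no] IH by simp
  then show ?case by simp
next
  case (Ps u E c m1 c' m2 u')
  have "par (shiftE u E) (mctr c (lift 1 0 p2)) (m1 + n2) (mctr c' (lift 1 0 q2))"
    using Ps.IH(1) Ps.prems par_lift1 by simp
  then have "par E (Sub (mctr c (lift 1 0 p2)) u) (m1 + n2 + m2) (Sub (mctr c' (lift 1 0 q2)) u')"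
    using Ps.hyps(2) par.Ps by blast
  then show ?case by (simp add: add.commute add.left_commute)
qed auto

lemma GC: "par E u n u' \<Longrightarrow> sval u \<Longrightarrow> par E (gc x u) n (gc x u')"
proof (induction arbitrary: x rule: par.induct)
  case (P0 E t) show ?case by (rule par.P0)
next
  case (Pg u2 s E n q)
  have sr: "sval (gc (lower 0 s) u2)" using Pg by simp
  have no: "\<not> occ 0 (gc (lift 1 0 x) s)" using Pg occ_gc by (fastforce simp: occ_lift)
  have "gc (lower 0 (gc (lift 1 0 x) s)) u2 = gc (gc (lower 0 (lift 1 0 x)) (lower 0 s)) u2"
    using Pg by (simp add: lower_gc occ_lift)
  also have "\<dots> = gc x (gc (lower 0 s) u2)" by (simp add: lower_lift_id gc_gc)
  finally show ?case using par.Pg[OF Pg.hyps(1) no] Pg.IH[OF sr, of x] by simp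
next
  case (Ps w E s m1 s' m2 w')
  then show ?case by (auto intro: par.Ps)
qed auto

lemma N_not_sval: "is_N K \<Longrightarrow> \<not> sval (plugW K (Var j))"
  by (induction K) auto

lemma key_id: "\<not> occW 0 K0 \<Longrightarrow>
  gc (lower 0 (plugW K0 (lift (Suc (Suc i + depthW K0)) 0 w))) u =
  plugW (gcW (lowerW 0 K0) u) (lift (Suc (i + depthW (gcW (lowerW 0 K0) u))) 0 w)"
proof -
  let ?d = "depthW K0"
  have "lower ?d (lift (Suc (Suc i + ?d)) 0 w) = lift (Suc i + ?d) 0 w"
    by (simp add: lower_lift1)
  moreover have "lift (slen u) ?d (lift (Suc i + ?d) 0 w) = lift (Suc i + ?d + slen u) 0 w"
    by (simp add: lift_lift2)
  ultimately show ?thesis by (simp add: lower_plugW gc_plugW add.assoc)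
qed

lemma key_nocc: "\<not> occW 0 K0 \<Longrightarrow> \<not> occ 0 (plugW K0 (lift (Suc (Suc i + depthW K0)) 0 w))"
  by (simp add: occ_plugW occ_lift)



definition HVR :: "(nat \<Rightarrow> trm option) \<Rightarrow> nat \<Rightarrow> wctx \<Rightarrow> nat \<Rightarrow> wctx \<Rightarrow> bool" where
  "HVR E i K n K' \<longleftrightarrow> (\<forall>w m w'. par (\<lambda>j. E (Suc (i + j))) w m w' \<longrightarrow>
     par E (plugW K (lift (Suc (i + depthW K)) 0 w)) (n + m) (plugW K' (lift (Suc (i + depthW K')) 0 w')))"

lemma HV: "par E b n b' \<Longrightarrow> res a b = RHV K i \<Longrightarrow>
   (\<exists>w. E i = Some w \<and> 1 \<le> n \<and> par E (plugW K (lift (Suc (i + depthW K)) 0 w)) (n - 1) b')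
 \<or> (\<exists>K'. res a b' = RHV K' i \<and> (is_N K \<longrightarrow> is_N K') \<and> HVR E i K n K')"
proof (induction arbitrary: a K i rule: par.induct)
  case (P0 E t)
  have "HVR E i K 0 K"
    unfolding HVR_def
  proof (intro allI impI)
    fix w m w' assume h: "par (\<lambda>j. E (Suc (i + j))) w m w'"
    have "\<forall>j. envW K E (j + Suc (i + depthW K)) = E (Suc (i + j))"
      using envW_depth[of K E] by (metis add_Suc_right add.commute add.left_commute)
    then have "par (envW K E) (lift (Suc (i + depthW K)) 0 w) m (lift (Suc (i + depthW K)) 0 w')"
      using par_lift0[OF h] by blast
    then show "par E (plugW K (lift (Suc (i + depthW K)) 0 w)) (0 + m) (plugW K (lift (Suc (i + depthW K)) 0 w'))"
      using par_ctx by simp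
  qed
  then show ?case using P0 by blast
next
  case (Pm x E u)
  then show ?case by (simp add: res_False_Val[symmetric])
next
  case (Pv E i0 w)
  then have "K = WHole" "i = i0" by auto
  then show ?case using Pv par.P0 by auto
next
  case (Pg u c E n q)
  have nc: "\<not> occ 0 c" by fact
  obtain K0 where rc: "res a c = RHV K0 (Suc i)" and KK: "K = WSubL K0 u"
  proof (cases "res a c")
    case (RStep s) then show ?thesis using Pg.prems by simp
  next
    case (RHV K0 j)
    show ?thesis
    proof (cases j)
      case 0 then show ?thesis using RHV nc res_HV_occ by blast
    next
      case (Suc j') then show ?thesis using RHV Pg.prems that by auto
    qed
  next
    case RVal then show ?thesis using Pg.prems Pg.hyps by (cases a) auto
  qed
  have cK: "c = plugW K0 (Var (Suc i + depthW K0))" using res_HV_plug[OF rc] by simp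
  then have noK: "\<not> occW 0 K0" using nc by (simp add: occ_plugW)
  let ?Kr = "gcW (lowerW 0 K0) u"
  have rr: "res a (gc (lower 0 c) u) = RHV ?Kr i" using res_gc_lower_HV[OF Pg.hyps(1) nc rc] .
  have eqK: "\<And>w. plugW K (lift (Suc (i + depthW K)) 0 w) = Sub (plugW K0 (lift (Suc (Suc i + depthW K0)) 0 w)) u"
    using KK by simp
  have step: "\<And>w m q'. par E (plugW ?Kr (lift (Suc (i + depthW ?Kr)) 0 w)) m q' \<Longrightarrow>
      par E (plugW K (lift (Suc (i + depthW K)) 0 w)) (Suc m) q'"
  proof -
    fix w m q' assume "par E (plugW ?Kr (lift (Suc (i + depthW ?Kr)) 0 w)) m q'"
    then have "par E (gc (lower 0 (plugW K0 (lift (Suc (Suc i + depthW K0)) 0 w))) u) m q'"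
      using key_id[OF noK] by simp
    then show "par E (plugW K (lift (Suc (i + depthW K)) 0 w)) (Suc m) q'"
      using par.Pg[OF Pg.hyps(1) key_nocc[OF noK]] eqK by simp
  qed
  from Pg.IH[OF rr] show ?case
  proof
    assume "\<exists>w. E i = Some w \<and> 1 \<le> n \<and> par E (plugW ?Kr (lift (Suc (i + depthW ?Kr)) 0 w)) (n - 1) q"
    then obtain w where "E i = Some w" "1 \<le> n" "par E (plugW ?Kr (lift (Suc (i + depthW ?Kr)) 0 w)) (n - 1) q"
      by blast
    then show ?case using step by fastforce
  next
    assume "\<exists>K'. res a q = RHV K' i \<and> (is_N ?Kr \<longrightarrow> is_N K') \<and> HVR E i ?Kr n K'"
    then obtain K' where "res a q = RHV K' i" "is_N ?Kr \<longrightarrow> is_N K'" "HVR E i ?Kr n K'" by blast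
    moreover have "HVR E i K (Suc n) K'"
      using \<open>HVR E i ?Kr n K'\<close> step unfolding HVR_def by simp
    ultimately show ?case using KK by auto
  qed
next
  case (Pa E p n1 p' q n2 q')
  obtain K1 where rp: "res False p = RHV K1 i" and KK: "K = WAppL K1 q"
    using Pa.prems by (auto split: result.splits)
  from Pa.IH(1)[OF rp] show ?case
  proof
    assume "\<exists>w. E i = Some w \<and> 1 \<le> n1 \<and> par E (plugW K1 (lift (Suc (i + depthW K1)) 0 w)) (n1 - 1) p'"
    then obtain w where "E i = Some w" "1 \<le> n1" "par E (plugW K1 (lift (Suc (i + depthW K1)) 0 w)) (n1 - 1) p'"
      by blast
    then show ?case using KK par.Pa[OF _ Pa.hyps(2)] by fastforce
  next
    assume "\<exists>K'. res False p' = RHV K' i \<and> (is_N K1 \<longrightarrow> is_N K') \<and> HVR E i K1 n1 K'"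
    then obtain K' where r': "res False p' = RHV K' i" "is_N K1 \<longrightarrow> is_N K'" "HVR E i K1 n1 K'" by blast
    have "HVR E i K (n1 + n2) (WAppL K' q')"
      unfolding HVR_def
    proof (intro allI impI)
      fix w m w' assume "par (\<lambda>j. E (Suc (i + j))) w m w'"
      then have "par E (plugW K1 (lift (Suc (i + depthW K1)) 0 w)) (n1 + m) (plugW K' (lift (Suc (i + depthW K')) 0 w'))"
        using r'(3) unfolding HVR_def by blast
      then have "par E (App (plugW K1 (lift (Suc (i + depthW K1)) 0 w)) q) (n1 + m + n2) (App (plugW K' (lift (Suc (i + depthW K')) 0 w')) q')"
        using par.Pa[OF _ Pa.hyps(2)] by blast
      then show "par E (plugW K (lift (Suc (i + depthW K)) 0 w)) (n1 + n2 + m) (plugW (WAppL K' q') (lift (Suc (i + depthW (WAppL K' q'))) 0 w'))"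
        using KK by (simp add: add.commute add.left_commute)
    qed
    then show ?case using r' KK by auto
  qed
next
  case (Ps u E c n1 c' n2 u')
  show ?case
  proof (cases "res a c")
    case (RStep s) then show ?thesis using Ps.prems by simp
  next
    case (RHV K0 j)
    then obtain j' where j: "j = Suc j'" using Ps.prems by (cases j) auto
    then have i: "j' = i" and KK: "K = WSubL K0 u" using Ps.prems RHV by auto
    have rc: "res a c = RHV K0 (Suc i)" using RHV j i by simp
    from Ps.IH(1)[OF rc] show ?thesis
    proof
      assume "\<exists>w. shiftE u E (Suc i) = Some w \<and> 1 \<le> n1 \<and> par (shiftE u E) (plugW K0 (lift (Suc (Suc i + depthW K0)) 0 w)) (n1 - 1) c'"
      then obtain w where "E i = Some w" "1 \<le> n1" "par (shiftE u E) (plugW K0 (lift (Suc (Suc i + depthW K0)) 0 w)) (n1 - 1) c'"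
        by auto
      then show ?thesis using KK par.Ps[OF _ Ps.hyps(2)] by fastforce
    next
      assume "\<exists>K'. res a c' = RHV K' (Suc i) \<and> (is_N K0 \<longrightarrow> is_N K') \<and> HVR (shiftE u E) (Suc i) K0 n1 K'"
      then obtain K' where r': "res a c' = RHV K' (Suc i)" "is_N K0 \<longrightarrow> is_N K'" "HVR (shiftE u E) (Suc i) K0 n1 K'"
        by blast
      have "HVR E i K (n1 + n2) (WSubL K' u')"
        unfolding HVR_def
      proof (intro allI impI)
        fix w m w' assume "par (\<lambda>j. E (Suc (i + j))) w m w'"
        then have "par (\<lambda>j. shiftE u E (Suc (Suc i + j))) w m w'" by simp
        then have "par (shiftE u E) (plugW K0 (lift (Suc (Suc i + depthW K0)) 0 w)) (n1 + m) (plugW K' (lift (Suc (Suc i + depthW K')) 0 w'))"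
          using r'(3) unfolding HVR_def by blast
        then have "par E (Sub (plugW K0 (lift (Suc (Suc i + depthW K0)) 0 w)) u) (n1 + m + n2) (Sub (plugW K' (lift (Suc (Suc i + depthW K')) 0 w')) u')"
          using par.Ps[OF _ Ps.hyps(2)] by blast
        then show "par E (plugW K (lift (Suc (i + depthW K)) 0 w)) (n1 + n2 + m) (plugW (WSubL K' u') (lift (Suc (i + depthW (WSubL K' u'))) 0 w'))"
          using KK by (simp add: add.commute add.left_commute)
      qed
      then show ?thesis using r' KK by auto
    qed
  next
    case RVal
    have a: "a" using Ps.prems RVal by (cases a) auto
    have cond: "\<not> (\<not> occ 0 c \<and> sval u)" using Ps.prems RVal a by (auto split: if_splits)
    obtain K1 where ru: "res True u = RHV K1 i" and KK: "K = WSubR c K1"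
      using Ps.prems RVal a cond by (auto split: result.splits)
    have sc: "strict_answer c" using RVal a res_Val_strict by simp
    then have n10: "n1 = 0" "c' = c" using strict_par[OF Ps.hyps(1)] by auto
    from Ps.IH(2)[OF ru] show ?thesis
    proof
      assume "\<exists>w. E i = Some w \<and> 1 \<le> n2 \<and> par E (plugW K1 (lift (Suc (i + depthW K1)) 0 w)) (n2 - 1) u'"
      then obtain w where "E i = Some w" "1 \<le> n2" "par E (plugW K1 (lift (Suc (i + depthW K1)) 0 w)) (n2 - 1) u'"
        by blast
      then show ?thesis using KK n10 par.Ps[OF par.P0] by fastforce
    next
      assume "\<exists>K'. res True u' = RHV K' i \<and> (is_N K1 \<longrightarrow> is_N K') \<and> HVR E i K1 n2 K'"
      then obtain K' where r': "res True u' = RHV K' i" "is_N K1 \<longrightarrow> is_N K'" "HVR E i K1 n2 K'"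
        by blast
      have "\<not> (\<not> occ 0 c \<and> sval u')"
      proof
        assume h: "\<not> occ 0 c \<and> sval u'"
        then have "\<not> sval u" using cond by blast
        then have "is_N K1" using res_HV_N[OF ru] by blast
        then have "is_N K'" using r'(2) by blast
        then have "\<not> sval u'" using res_HV_plug[OF r'(1)] N_not_sval by metis
        then show False using h by blast
      qed
      then have rt: "res a (Sub c' u') = RHV (WSubR c K') i" using r'(1) a n10 RVal by simp
      have "HVR E i K (n1 + n2) (WSubR c K')"
        unfolding HVR_def
      proof (intro allI impI)
        fix w m w' assume "par (\<lambda>j. E (Suc (i + j))) w m w'"
        then have "par E (plugW K1 (lift (Suc (i + depthW K1)) 0 w)) (n2 + m) (plugW K' (lift (Suc (i + depthW K')) 0 w'))"
          using r'(3) unfolding HVR_def by blast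
        then have "par E (Sub c (plugW K1 (lift (Suc (i + depthW K1)) 0 w))) (0 + (n2 + m)) (Sub c (plugW K' (lift (Suc (i + depthW K')) 0 w')))"
          using par.Ps[OF par.P0] by blast
        then show "par E (plugW K (lift (Suc (i + depthW K)) 0 w)) (n1 + n2 + m) (plugW (WSubR c K') (lift (Suc (i + depthW (WSubR c K'))) 0 w'))"
          using KK n10 by simp
      qed
      then show ?thesis using rt KK by auto
    qed
  qed
qed



lemma CL: "par E u n u' \<Longrightarrow> \<not> sval u \<Longrightarrow> sval u' \<Longrightarrow> res True u = RStep s \<Longrightarrow>
   1 \<le> n \<and> par E s (n - 1) u'"
proof (induction arbitrary: s rule: par.induct)
  case (P0 E t) then show ?case by simp
next
  case (Pm x E u)
  then have "s = mctr x u" by (simp add: res_False_Val[symmetric])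
  then show ?case by (simp add: par.P0)
next
  case (Pg u2 c E n q)
  have nc: "\<not> occ 0 c" by fact
  have nsc: "\<not> sval c" using Pg.prems by simp
  show ?case
  proof (cases "res True c")
    case (RStep s1)
    then have s: "s = Sub s1 u2" using Pg.prems by simp
    have ns1: "\<not> occ 0 s1" using res_step_occ[OF RStep] nc by blast
    have rr: "res True (gc (lower 0 c) u2) = RStep (gc (lower 0 s1) u2)"
      using res_gc_lower_step[OF Pg.hyps(1) nc RStep] .
    have "\<not> sval (gc (lower 0 c) u2)" using nsc by simp
    then have "1 \<le> n \<and> par E (gc (lower 0 s1) u2) (n - 1) q" using Pg.IH Pg.prems(2) rr by blast
    then have "par E (Sub s1 u2) (Suc (n - 1)) q" using par.Pg[OF Pg.hyps(1) ns1] by blast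
    then show ?thesis using s \<open>1 \<le> n \<and> _\<close> by simp
  next
    case (RHV K j)
    then show ?thesis using Pg.prems nc res_HV_occ by (cases j) auto
  next
    case RVal then show ?thesis using nsc res_Val_strict strict_sval by blast
  qed
next
  case (Pv E i w) then show ?case by simp
next
  case (Pa E p n1 p' q n2 q') then show ?case by simp
next
  case (Ps w E c n1 c' n2 w')
  have nsc: "\<not> sval c" and sc': "sval c'" using Ps.prems by auto
  show ?case
  proof (cases "res True c")
    case (RStep s1)
    then have s: "s = Sub s1 w" using Ps.prems by simp
    have "1 \<le> n1 \<and> par (shiftE w E) s1 (n1 - 1) c'" using Ps.IH(1)[OF nsc sc' RStep] .
    then show ?thesis using s par.Ps[OF _ Ps.hyps(2)] by fastforce
  next
    case (RHV K j)
    then have j: "j = 0" using Ps.prems by (cases j) auto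
    then have s: "s = Sub (plugW K (lift (Suc (depthW K)) 0 w)) w" using Ps.prems RHV by simp
    have rc: "res True c = RHV K 0" using RHV j by simp
    from HV[OF Ps.hyps(1) rc] show ?thesis
    proof
      assume "\<exists>w0. shiftE w E 0 = Some w0 \<and> 1 \<le> n1 \<and> par (shiftE w E) (plugW K (lift (Suc (0 + depthW K)) 0 w0)) (n1 - 1) c'"
      then have "1 \<le> n1" "par (shiftE w E) (plugW K (lift (Suc (depthW K)) 0 w)) (n1 - 1) c'" by auto
      then show ?thesis using s par.Ps[OF _ Ps.hyps(2)] by fastforce
    next
      assume "\<exists>K'. res True c' = RHV K' 0 \<and> (is_N K \<longrightarrow> is_N K') \<and> HVR (shiftE w E) 0 K n1 K'"
      then obtain K' where r': "res True c' = RHV K' 0" "is_N K \<longrightarrow> is_N K'" by blast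
      have "is_N K" using res_HV_N[OF rc] nsc by blast
      then have "\<not> sval c'" using r' res_HV_plug[OF r'(1)] N_not_sval by metis
      then show ?thesis using sc' by blast
    qed
  next
    case RVal then show ?thesis using nsc res_Val_strict strict_sval by blast
  qed
qed

lemma DL: "par E t n ta \<Longrightarrow> res a t = RStep t' \<Longrightarrow>
   (1 \<le> n \<and> par E t' (n - 1) ta) \<or> (\<exists>tb n'. res a ta = RStep tb \<and> par E t' n' tb \<and> n \<le> n')"
proof (induction arbitrary: a t' rule: par.induct)
  case (P0 E t) then show ?case using par.P0 by blast
next
  case (Pm x E u)
  then have "t' = mctr x u" by (simp add: res_False_Val[symmetric])
  then show ?case by (simp add: par.P0)
next
  case (Pg u c E n q)
  have nc: "\<not> occ 0 c" by fact
  show ?case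
  proof (cases "res a c")
    case (RStep s)
    then have t': "t' = Sub s u" using Pg.prems by simp
    have ns: "\<not> occ 0 s" using res_step_occ[OF RStep] nc by blast
    have rr: "res a (gc (lower 0 c) u) = RStep (gc (lower 0 s) u)"
      using res_gc_lower_step[OF Pg.hyps(1) nc RStep] .
    from Pg.IH[OF rr] show ?thesis
    proof
      assume h: "1 \<le> n \<and> par E (gc (lower 0 s) u) (n - 1) q"
      then have "par E (Sub s u) (Suc (n - 1)) q" using par.Pg[OF Pg.hyps(1) ns] by blast
      then show ?thesis using h t' by simp
    next
      assume "\<exists>tb n'. res a q = RStep tb \<and> par E (gc (lower 0 s) u) n' tb \<and> n \<le> n'"
      then obtain tb n' where h: "res a q = RStep tb" "par E (gc (lower 0 s) u) n' tb" "n \<le> n'" by blast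
      then have "par E (Sub s u) (Suc n') tb" using par.Pg[OF Pg.hyps(1) ns] by blast
      then show ?thesis using h t' by auto
    qed
  next
    case (RHV K j)
    then show ?thesis using Pg.prems nc res_HV_occ by (cases j) auto
  next
    case RVal
    have a: "a" using Pg.prems RVal by (cases a) auto
    then have "t' = gc (lower 0 c) u" using Pg.prems RVal Pg.hyps by simp
    then show ?thesis using Pg.hyps(3) by simp
  qed
next
  case (Pv E i w) then show ?case by simp
next
  case (Pa E p n1 p' q n2 q')
  show ?case
  proof (cases "res False p")
    case (RStep s)
    then have t': "t' = App s q" using Pa.prems by simp
    from Pa.IH(1)[OF RStep] show ?thesis
    proof
      assume "1 \<le> n1 \<and> par E s (n1 - 1) p'"
      then show ?thesis using t' par.Pa[OF _ Pa.hyps(2)] by fastforce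
    next
      assume "\<exists>tb n'. res False p' = RStep tb \<and> par E s n' tb \<and> n1 \<le> n'"
      then obtain tb n' where h: "res False p' = RStep tb" "par E s n' tb" "n1 \<le> n'" by blast
      then have "par E t' (n' + n2) (App tb q')" using t' par.Pa[OF _ Pa.hyps(2)] by blast
      moreover have "res a (App p' q') = RStep (App tb q')" using h by simp
      ultimately show ?thesis using h by fastforce
    qed
  next
    case (RHV K i) then show ?thesis using Pa.prems by simp
  next
    case RVal
    then have sp: "sval p" and t': "t' = mctr p q" using Pa.prems by (simp add: res_False_Val, simp)
    have "sval p'" using par_sval[OF Pa.hyps(1) sp] .
    then have "res a (App p' q') = RStep (mctr p' q')" by (simp add: res_False_Val[symmetric])
    moreover have "par E t' (n1 + n2) (mctr p' q')" using MC[OF Pa.hyps(1) sp Pa.hyps(2)] t' by simp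
    ultimately show ?thesis by blast
  qed
next
  case (Ps u E c n1 c' n2 u')
  show ?case
  proof (cases "res a c")
    case (RStep s)
    then have t': "t' = Sub s u" using Ps.prems by simp
    from Ps.IH(1)[OF RStep] show ?thesis
    proof
      assume "1 \<le> n1 \<and> par (shiftE u E) s (n1 - 1) c'"
      then show ?thesis using t' par.Ps[OF _ Ps.hyps(2)] by fastforce
    next
      assume "\<exists>tb n'. res a c' = RStep tb \<and> par (shiftE u E) s n' tb \<and> n1 \<le> n'"
      then obtain tb n' where h: "res a c' = RStep tb" "par (shiftE u E) s n' tb" "n1 \<le> n'" by blast
      then have "par E t' (n' + n2) (Sub tb u')" using t' par.Ps[OF _ Ps.hyps(2)] by blast
      moreover have "res a (Sub c' u') = RStep (Sub tb u')" using h by simp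
      ultimately show ?thesis using h by fastforce
    qed
  next
    case (RHV K j)
    then have j: "j = 0" using Ps.prems by (cases j) auto
    then have t': "t' = Sub (plugW K (lift (Suc (depthW K)) 0 u)) u" using Ps.prems RHV by simp
    have rc: "res a c = RHV K 0" using RHV j by simp
    from HV[OF Ps.hyps(1) rc] show ?thesis
    proof
      assume "\<exists>w0. shiftE u E 0 = Some w0 \<and> 1 \<le> n1 \<and> par (shiftE u E) (plugW K (lift (Suc (0 + depthW K)) 0 w0)) (n1 - 1) c'"
      then have "1 \<le> n1" "par (shiftE u E) (plugW K (lift (Suc (depthW K)) 0 u)) (n1 - 1) c'" by auto
      then show ?thesis using t' par.Ps[OF _ Ps.hyps(2)] by fastforce
    next
      assume "\<exists>K'. res a c' = RHV K' 0 \<and> (is_N K \<longrightarrow> is_N K') \<and> HVR (shiftE u E) 0 K n1 K'"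
      then obtain K' where r': "res a c' = RHV K' 0" "HVR (shiftE u E) 0 K n1 K'" by blast
      have "par (\<lambda>j. shiftE u E (Suc (0 + j))) u n2 u'" using Ps.hyps(2) by simp
      then have "par (shiftE u E) (plugW K (lift (Suc (0 + depthW K)) 0 u)) (n1 + n2) (plugW K' (lift (Suc (0 + depthW K')) 0 u'))"
        using r'(2) unfolding HVR_def by blast
      then have "par E t' (n1 + n2 + n2) (Sub (plugW K' (lift (Suc (depthW K')) 0 u')) u')"
        using t' par.Ps[OF _ Ps.hyps(2)] by simp
      moreover have "res a (Sub c' u') = RStep (Sub (plugW K' (lift (Suc (depthW K')) 0 u')) u')"
        using r'(1) by simp
      ultimately show ?thesis by fastforce
    qed
  next
    case RVal
    have a: "a" using Ps.prems RVal by (cases a) auto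
    have sc: "strict_answer c" using RVal a res_Val_strict by simp
    then have n10: "n1 = 0" "c' = c" using strict_par[OF Ps.hyps(1)] by auto
    show ?thesis
    proof (cases "\<not> occ 0 c \<and> sval u")
      case True
      then have t': "t' = gc (lower 0 c) u" using Ps.prems RVal a by simp
      have "sval u'" using par_sval[OF Ps.hyps(2)] True by blast
      then have "res a (Sub c' u') = RStep (gc (lower 0 c) u')" using True RVal a n10 by simp
      moreover have "par E t' n2 (gc (lower 0 c) u')" using GC[OF Ps.hyps(2)] True t' by blast
      ultimately show ?thesis using n10 by fastforce
    next
      case False
      show ?thesis
      proof (cases "res True u")
        case (RStep s)
        then have t': "t' = Sub c s" using Ps.prems RVal a False by (auto split: if_splits)
        show ?thesis
        proof (cases "\<not> occ 0 c \<and> sval u'")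
          case True
          then have "\<not> sval u" using False by blast
          then have "1 \<le> n2 \<and> par E s (n2 - 1) u'" using CL[OF Ps.hyps(2) _ _ RStep] True by blast
          then have "1 \<le> n2" "par E t' (0 + (n2 - 1)) (Sub c u')" using t' par.Ps[OF par.P0] by auto
          then show ?thesis using n10 by simp
        next
          case False2: False
          from Ps.IH(2)[OF RStep] show ?thesis
          proof
            assume "1 \<le> n2 \<and> par E s (n2 - 1) u'"
            then have "1 \<le> n2" "par E t' (0 + (n2 - 1)) (Sub c u')" using t' par.Ps[OF par.P0] by auto
            then show ?thesis using n10 by simp
          next
            assume "\<exists>tb n'. res True u' = RStep tb \<and> par E s n' tb \<and> n2 \<le> n'"
            then obtain tb n' where h: "res True u' = RStep tb" "par E s n' tb" "n2 \<le> n'" by blast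
            then have "par E t' (0 + n') (Sub c tb)" using t' par.Ps[OF par.P0] by blast
            moreover have "res a (Sub c' u') = RStep (Sub c tb)" using h False2 RVal a n10 by auto
            ultimately show ?thesis using h n10 by fastforce
          qed
        qed
      next
        case (RHV K i) then show ?thesis using Ps.prems RVal a False by (auto split: if_splits)
      next
        case RVal then show ?thesis using Ps.prems \<open>res a c = RVal\<close> a False by (auto split: if_splits)
      qed
    qed
  qed
qed



inductive dsteps :: "trm \<Rightarrow> nat \<Rightarrow> trm \<Rightarrow> bool" where
  D0: "dsteps t 0 t"
| DS: "res True t = RStep t' \<Longrightarrow> dsteps t' k z \<Longrightarrow> dsteps t (Suc k) z"

lemma dsteps_y: "dsteps t k z \<Longrightarrow> (y_step ^^ k) t z"
proof (induction rule: dsteps.induct)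
  case (D0 t) then show ?case by simp
next
  case (DS t t' k z)
  have "y_step t t'" using res_sound[OF DS(1)] .
  then show ?case using relpowp_Suc_I2[of y_step t t' k z] DS(3) by blast
qed

lemma dsteps_Suc_inv: "dsteps t (Suc k) z \<Longrightarrow> res True t = RStep t' \<Longrightarrow> dsteps t' k z"
  by (cases rule: dsteps.cases) auto

lemma dsteps_0_inv: "dsteps t 0 z \<Longrightarrow> t = z"
  by (induction t "0::nat" z rule: dsteps.induct) auto

lemma closed_step: "closed t \<Longrightarrow> res True t = RStep t' \<Longrightarrow> closed t'"
  unfolding closed_def using res_step_occ by blast

lemma claim: "strict_answer z \<Longrightarrow> closed t \<Longrightarrow> par (\<lambda>_. None) t n ta \<Longrightarrow> dsteps ta k z \<Longrightarrow>
  \<exists>k'. k + n \<le> k' \<and> dsteps t k' z"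
proof (induction k arbitrary: t n ta)
  case outer: (0 t n ta)
  then have taz: "ta = z" using dsteps_0_inv by blast
  show ?case using outer(2,3) taz
  proof (induction n arbitrary: t ta rule: less_induct)
    case (less n t ta)
    show ?case
    proof (cases "res True t")
      case RVal
      then have "strict_answer t" using res_Val_strict by blast
      then have "n = 0 \<and> ta = t" using strict_par less.prems(2) by blast
      then show ?thesis using less.prems D0 by auto
    next
      case (RHV K i)
      then show ?thesis using less.prems(1) res_HV_occ unfolding closed_def by blast
    next
      case (RStep t')
      have ct: "closed t'" using closed_step less.prems(1) RStep by blast
      from DL[OF less.prems(2) RStep] show ?thesis
      proof
        assume h: "1 \<le> n \<and> par (\<lambda>_. None) t' (n - 1) ta"
        then obtain k'' where "0 + (n - 1) \<le> k''" "dsteps t' k'' z" using less.IH[of "n - 1" t' ta] ct less.prems(3) by auto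
        then show ?thesis using DS[OF RStep] h by (intro exI[of _ "Suc k''"]) auto
      next
        assume "\<exists>tb n'. res True ta = RStep tb \<and> par (\<lambda>_. None) t' n' tb \<and> n \<le> n'"
        then show ?thesis using less.prems(3) outer(1) strict_res by auto
      qed
    qed
  qed
next
  case (Suc k0 t n ta)
  show ?case using Suc.prems(2,3,4)
  proof (induction n arbitrary: t ta rule: less_induct)
    case (less n t ta)
    show ?case
    proof (cases "res True t")
      case RVal
      then have "strict_answer t" using res_Val_strict by blast
      then have "n = 0 \<and> ta = t" using strict_par less.prems(2) by blast
      then show ?thesis using less.prems by auto
    next
      case (RHV K i)
      then show ?thesis using less.prems(1) res_HV_occ unfolding closed_def by blast
    next
      case (RStep t')
      have ct: "closed t'" using closed_step less.prems(1) RStep by blast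
      from DL[OF less.prems(2) RStep] show ?thesis
      proof
        assume h: "1 \<le> n \<and> par (\<lambda>_. None) t' (n - 1) ta"
        then obtain k'' where "Suc k0 + (n - 1) \<le> k''" "dsteps t' k'' z"
          using less.IH[of "n - 1" t' ta] ct less.prems(3) by auto
        then show ?thesis using DS[OF RStep] h by (intro exI[of _ "Suc k''"]) auto
      next
        assume "\<exists>tb n'. res True ta = RStep tb \<and> par (\<lambda>_. None) t' n' tb \<and> n \<le> n'"
        then obtain tb n' where h: "res True ta = RStep tb" "par (\<lambda>_. None) t' n' tb" "n \<le> n'" by blast
        have "dsteps tb k0 z" using dsteps_Suc_inv[OF less.prems(3) h(1)] .
        then obtain k'' where "k0 + n' \<le> k''" "dsteps t' k'' z" using Suc.IH[OF Suc.prems(1) ct h(2)] by blast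
        then show ?thesis using DS[OF RStep] h(3) by (intro exI[of _ "Suc k''"]) auto
      qed
    qed
  qed
qed

lemma main_d: "strict_answer a \<Longrightarrow> closed t \<Longrightarrow> (w_step ^^ h) t a \<Longrightarrow> \<exists>k. h \<le> k \<and> dsteps t k a"
proof (induction h arbitrary: t)
  case 0 then show ?case using D0 by auto
next
  case (Suc h)
  obtain t1 where s: "w_step t t1" and r: "(w_step ^^ h) t1 a" using relpowp_Suc_D2[OF Suc.prems(3)] by blast
  have "closed t1" using w_step_closed s Suc.prems(2) by blast
  then obtain k where k: "h \<le> k" "dsteps t1 k a" using Suc.IH Suc.prems(1) r by blast
  have "par (\<lambda>_. None) t 1 t1" using w_par[OF s] .
  then obtain k' where "k + 1 \<le> k'" "dsteps t k' a" using claim[OF Suc.prems(1) Suc.prems(2)] k(2) by blast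
  then show ?case using k(1) by (intro exI[of _ k']) auto
qed

theorem proposition12p7:
  assumes "closed t" and "(w_step ^^ h) t a" and "strict_answer a"
  shows "\<exists>k. (y_step ^^ k) t a \<and> h \<le> k"
  using main_d[OF assms(3,1,2)] dsteps_y by blast

end
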